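(* Let $G$ be a connected graph with $\hat\delta$-thin triangles, let $u,v$ be arbitrary vertices and $\lambda$ a fixed real number. Then there exists a ball $B$ of radius $2\hat\delta$ such that for every pair of vertices $x,y$ with $d(x,u)<\lambda\,d(u,v)$ and $d(y,v)<(1-\lambda)\,d(u,v)$, every shortest path from $x$ to $y$ intersects $B$.
   Context: $G$ is regarded as a geodesic metric space (each edge an interval of length 1), with distance $d$. For vertices $a,b,c$ let $(b.c)_a=\tfrac12(d(a,b)+d(a,c)-d(b,c))$. $G$ has $\hat\delta$-thin triangles if for every triple of vertices $x_1,x_2,x_3$ and every choice of shortest paths $p_{i,j}$ between $x_i$ and $x_j$, for every $i$ with $\{j,\ell\}$ the other two indices and every $k$ with $1\le k\le (x_j.x_\ell)_{x_i}$, the points $y_k\in p_{i,j}$ and $y'_k\in p_{i,\ell}$ at distance $k$ from $x_i$ satisfy $d(y_k,y'_k)\le\hat\delta$. *)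

theory Defs
  imports Complex_Main
begin

definition graph :: "'a set \<Rightarrow> ('a \<Rightarrow> 'a \<Rightarrow> bool) \<Rightarrow> bool" where
  "graph V E \<longleftrightarrow> (\<forall>a b. E a b \<longrightarrow> a \<in> V \<and> b \<in> V \<and> E b a \<and> a \<noteq> b)"

definition walk :: "'a set \<Rightarrow> ('a \<Rightarrow> 'a \<Rightarrow> bool) \<Rightarrow> 'a list \<Rightarrow> bool" where
  "walk V E p \<longleftrightarrow> p \<noteq> [] \<and> set p \<subseteq> V \<and> (\<forall>i. Suc i < length p \<longrightarrow> E (p ! i) (p ! Suc i))"

definition walk_between :: "'a set \<Rightarrow> ('a \<Rightarrow> 'a \<Rightarrow> bool) \<Rightarrow> 'a list \<Rightarrow> 'a \<Rightarrow> 'a \<Rightarrow> bool" where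
  "walk_between V E p x y \<longleftrightarrow> walk V E p \<and> hd p = x \<and> last p = y"

definition connected_graph :: "'a set \<Rightarrow> ('a \<Rightarrow> 'a \<Rightarrow> bool) \<Rightarrow> bool" where
  "connected_graph V E \<longleftrightarrow> V \<noteq> {} \<and> (\<forall>x\<in>V. \<forall>y\<in>V. \<exists>p. walk_between V E p x y)"

definition gdist :: "'a set \<Rightarrow> ('a \<Rightarrow> 'a \<Rightarrow> bool) \<Rightarrow> 'a \<Rightarrow> 'a \<Rightarrow> real" where
  "gdist V E x y = real (LEAST n. \<exists>p. walk_between V E p x y \<and> length p = Suc n)"

definition shortest_path :: "'a set \<Rightarrow> ('a \<Rightarrow> 'a \<Rightarrow> bool) \<Rightarrow> 'a list \<Rightarrow> 'a \<Rightarrow> 'a \<Rightarrow> bool" where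
  "shortest_path V E p x y \<longleftrightarrow> walk_between V E p x y \<and> real (length p - 1) = gdist V E x y"

definition gromov :: "'a set \<Rightarrow> ('a \<Rightarrow> 'a \<Rightarrow> bool) \<Rightarrow> 'a \<Rightarrow> 'a \<Rightarrow> 'a \<Rightarrow> real" where
  "gromov V E a b c = (gdist V E a b + gdist V E a c - gdist V E b c) / 2"

text \<open>Shortest paths p_{i,j} are taken oriented from x_i;
  reversing a shortest path gives a shortest path, so quantifying over all
  ordered triples covers every index i.  The point at distance k from x_i on a
  shortest path starting at x_i is its k-th vertex.\<close>
definition thin_triangles :: "'a set \<Rightarrow> ('a \<Rightarrow> 'a \<Rightarrow> bool) \<Rightarrow> real \<Rightarrow> bool" where
  "thin_triangles V E \<delta> \<longleftrightarrow>
     (\<forall>x1\<in>V. \<forall>x2\<in>V. \<forall>x3\<in>V. \<forall>p q k.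
        shortest_path V E p x1 x2 \<longrightarrow> shortest_path V E q x1 x3 \<longrightarrow>
        1 \<le> real k \<longrightarrow> real k \<le> gromov V E x1 x2 x3 \<longrightarrow>
        gdist V E (p ! k) (q ! k) \<le> \<delta>)"

text \<open>Points of the geodesic metric graph (each edge an interval of length 1):
  a triple (a,b,t) is the point of the edge ab at distance t from a;
  vertices are represented as (a,a,0).\<close>
definition mpoints :: "'a set \<Rightarrow> ('a \<Rightarrow> 'a \<Rightarrow> bool) \<Rightarrow> ('a \<times> 'a \<times> real) set" where
  "mpoints V E = {(a, a, 0) | a. a \<in> V} \<union> {(a, b, t) | a b t. E a b \<and> 0 \<le> t \<and> t \<le> 1}"

fun vpdist :: "'a set \<Rightarrow> ('a \<Rightarrow> 'a \<Rightarrow> bool) \<Rightarrow> 'a \<times> 'a \<times> real \<Rightarrow> 'a \<Rightarrow> real" where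
  "vpdist V E (a, b, s) w = min (s + gdist V E a w) ((1 - s) + gdist V E b w)"

text \<open>Distance in the metric graph between two points: a geodesic either stays in
  a common edge, or leaves the edge of the first point through one of its endpoints.\<close>
fun mdist :: "'a set \<Rightarrow> ('a \<Rightarrow> 'a \<Rightarrow> bool) \<Rightarrow> 'a \<times> 'a \<times> real \<Rightarrow> 'a \<times> 'a \<times> real \<Rightarrow> real" where
  "mdist V E (a, b, s) Q =
     (let through = min (s + vpdist V E Q a) ((1 - s) + vpdist V E Q b) in
      case Q of (c, e, t) \<Rightarrow>
        (if c = a \<and> e = b then min through \<bar>s - t\<bar>
         else if c = b \<and> e = a then min through \<bar>s - (1 - t)\<bar>
         else through))"

definition path_points :: "'a list \<Rightarrow> ('a \<times> 'a \<times> real) set" where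
  "path_points p = {(v, v, 0) | v. v \<in> set p} \<union>
     {(p ! i, p ! Suc i, t) | i t. Suc i < length p \<and> 0 \<le> t \<and> t \<le> 1}"

end

theory Submission
  imports Defs
begin

lemma gdist_le:
  assumes "walk_between V E p a b"
  shows "gdist V E a b \<le> real (length p - 1)"
proof -
  have ne: "p \<noteq> []" using assms unfolding walk_between_def walk_def by auto
  have "(LEAST n. \<exists>p. walk_between V E p a b \<and> length p = Suc n) \<le> length p - 1"
    by (rule Least_le) (use assms ne in auto)
  thus ?thesis unfolding gdist_def by simp
qed

lemma sp_exists:
  assumes "connected_graph V E" "a \<in> V" "b \<in> V"
  shows "\<exists>p. shortest_path V E p a b"
proof -
  obtain p0 where p0: "walk_between V E p0 a b" using assms unfolding connected_graph_def by blast
  have ne: "p0 \<noteq> []" using p0 unfolding walk_between_def walk_def by auto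
  have ex: "\<exists>n p. walk_between V E p a b \<and> length p = Suc n"
    using p0 ne by (intro exI[of _ "length p0 - 1"] exI[of _ p0]) auto
  obtain p where p: "walk_between V E p a b"
    "length p = Suc (LEAST n. \<exists>p. walk_between V E p a b \<and> length p = Suc n)"
    using LeastI_ex[OF ex] by blast
  thus ?thesis unfolding shortest_path_def gdist_def by (intro exI[of _ p]) auto
qed

lemma walk_rev:
  assumes "graph V E" "walk V E p"
  shows "walk V E (rev p)"
  unfolding walk_def
proof (intro conjI allI impI)
  show "rev p \<noteq> []" "set (rev p) \<subseteq> V" using assms(2) unfolding walk_def by auto
  fix i assume i: "Suc i < length (rev p)"
  have "E (p ! (length p - Suc (Suc i))) (p ! Suc (length p - Suc (Suc i)))"
    using assms(2) i unfolding walk_def by auto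
  moreover have "Suc (length p - Suc (Suc i)) = length p - Suc i" using i by auto
  ultimately have "E (p ! (length p - Suc (Suc i))) (p ! (length p - Suc i))" by simp
  hence "E (p ! (length p - Suc i)) (p ! (length p - Suc (Suc i)))"
    using assms(1) unfolding graph_def by blast
  thus "E (rev p ! i) (rev p ! Suc i)" using i by (simp add: rev_nth)
qed

lemma wb_rev:
  assumes "graph V E" "walk_between V E p a b"
  shows "walk_between V E (rev p) b a"
proof -
  have w: "walk V E p" "p \<noteq> []" "hd p = a" "last p = b"
    using assms(2) unfolding walk_between_def walk_def by auto
  show ?thesis using walk_rev[OF assms(1) w(1)] w unfolding walk_between_def
    by (simp add: hd_rev last_rev)
qed

lemma wb_in:
  assumes "walk_between V E p a b" shows "a \<in> V" "b \<in> V"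
  using assms unfolding walk_between_def walk_def
  by (auto intro: hd_in_set last_in_set)

lemma gdist_sym:
  assumes "graph V E" "connected_graph V E" "a \<in> V" "b \<in> V"
  shows "gdist V E a b = gdist V E b a"
proof -
  have le: "gdist V E x y \<le> gdist V E y x" if xy: "x \<in> V" "y \<in> V" for x y
  proof -
    obtain p where p: "shortest_path V E p y x" using sp_exists[OF assms(2) xy(2) xy(1)] by blast
    have "gdist V E x y \<le> real (length (rev p) - 1)"
      using gdist_le[OF wb_rev[OF assms(1)]] p unfolding shortest_path_def by blast
    thus ?thesis using p unfolding shortest_path_def by simp
  qed
  show ?thesis using le assms by (meson order_antisym)
qed

lemma sp_rev:
  assumes "graph V E" "connected_graph V E" "shortest_path V E p a b"
  shows "shortest_path V E (rev p) b a"
proof -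
  have w: "walk_between V E p a b" and l: "real (length p - 1) = gdist V E a b"
    using assms(3) unfolding shortest_path_def by auto
  have "gdist V E a b = gdist V E b a" using gdist_sym[OF assms(1,2) wb_in[OF w]] .
  thus ?thesis using wb_rev[OF assms(1) w] l unfolding shortest_path_def by simp
qed

lemma thinI:
  assumes "thin_triangles V E \<delta>" "x1 \<in> V" "x2 \<in> V" "x3 \<in> V"
    "shortest_path V E p x1 x2" "shortest_path V E q x1 x3" "1 \<le> real k"
    "real k \<le> gromov V E x1 x2 x3"
  shows "gdist V E (p ! k) (q ! k) \<le> \<delta>"
  using assms unfolding thin_triangles_def by blast

lemma walk_app:
  assumes "walk V E p" "walk V E (b # q)" "last p = b"
  shows "walk V E (p @ q)"
  unfolding walk_def
proof (intro conjI allI impI)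
  show "p @ q \<noteq> []" using assms unfolding walk_def by auto
  show "set (p @ q) \<subseteq> V" using assms unfolding walk_def by auto
  fix i assume i: "Suc i < length (p @ q)"
  have ne: "p \<noteq> []" using assms unfolding walk_def by auto
  consider "Suc i < length p" | "Suc i = length p" | "Suc i > length p" by linarith
  thus "E ((p @ q) ! i) ((p @ q) ! Suc i)"
  proof cases
    case 1 thus ?thesis using assms(1) by (simp add: nth_append walk_def)
  next
    case 2
    have "E ((b # q) ! 0) ((b # q) ! Suc 0)" using assms(2) i 2 unfolding walk_def by auto
    moreover have "p ! i = b" using 2 assms(3) ne by (metis diff_Suc_1 last_conv_nth)
    ultimately show ?thesis using 2 by (simp add: nth_append)
  next
    case 3
    have all: "\<forall>j. Suc j < length (b # q) \<longrightarrow> E ((b # q) ! j) ((b # q) ! Suc j)"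
      using assms(2) unfolding walk_def by blast
    have e: "Suc i - length p = Suc (i - length p)" using 3 by auto
    have "Suc (Suc (i - length p)) < length (b # q)" using i 3 by auto
    with all have "E ((b # q) ! Suc (i - length p)) ((b # q) ! Suc (Suc (i - length p)))" by blast
    hence "E (q ! (i - length p)) (q ! (Suc i - length p))" by (simp only: e nth_Cons_Suc)
    thus ?thesis using 3 by (simp add: nth_append)
  qed
qed

lemma gdist_tri:
  assumes "connected_graph V E" "a \<in> V" "b \<in> V" "c \<in> V"
  shows "gdist V E a c \<le> gdist V E a b + gdist V E b c"
proof -
  obtain p where p: "shortest_path V E p a b" using sp_exists[OF assms(1,2,3)] by blast
  obtain q where q: "shortest_path V E q b c" using sp_exists[OF assms(1,3,4)] by blast
  have qne: "q \<noteq> []" using q unfolding shortest_path_def walk_between_def walk_def by auto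
  then obtain q' where q': "q = b # q'" using q unfolding shortest_path_def walk_between_def
    by (cases q) auto
  have wp: "walk V E p" "last p = b" using p unfolding shortest_path_def walk_between_def by auto
  have wq: "walk V E (b # q')" using q q' unfolding shortest_path_def walk_between_def by simp
  have w: "walk V E (p @ q')" by (rule walk_app[OF wp(1) wq wp(2)])
  have pne: "p \<noteq> []" using p unfolding shortest_path_def walk_between_def walk_def by auto
  have hp: "hd p = a" "last p = b" and lq: "last q = c"
    using p q unfolding shortest_path_def walk_between_def by auto
  have "last (p @ q') = c"
  proof (cases "q' = []")
    case True thus ?thesis using lq hp q' by simp
  next
    case False thus ?thesis using lq q' by simp
  qed
  hence wb: "walk_between V E (p @ q') a c"
    using w hp pne unfolding walk_between_def by simp
  have "gdist V E a c \<le> real (length (p @ q') - 1)" by (rule gdist_le[OF wb])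
  also have "\<dots> = real (length p - 1) + real (length q - 1)"
  proof -
    have "length p \<ge> 1" using pne by (simp add: Suc_leI)
    thus ?thesis using q' by simp
  qed
  finally show ?thesis using p q unfolding shortest_path_def by simp
qed

lemma gdist_refl:
  assumes "a \<in> V" shows "gdist V E a a = 0"
proof -
  have "walk_between V E [a] a a" using assms unfolding walk_between_def walk_def by auto
  from gdist_le[OF this] show ?thesis unfolding gdist_def by simp
qed

lemma sp_len:
  assumes "shortest_path V E p a b" shows "real (length p - 1) = gdist V E a b" "p \<noteq> []"
    "set p \<subseteq> V" "hd p = a" "last p = b"
  using assms unfolding shortest_path_def walk_between_def walk_def by auto

lemma mdist_vert:
  "mdist V E (c, c, 0) (w, w, 0) \<le> gdist V E w c"
proof -
  have vp: "vpdist V E (w, w, 0) c = gdist V E w c" by simp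
  define th where "th = min (0 + vpdist V E (w, w, 0) c) ((1 - 0) + vpdist V E (w, w, 0) c)"
  have th: "th \<le> gdist V E w c" unfolding th_def vp by simp
  have "mdist V E (c, c, 0) (w, w, 0) = (if w = c \<and> w = c then min th \<bar>0 - 0\<bar>
         else if w = c \<and> w = c then min th \<bar>0 - (1 - 0)\<bar> else th)"
    unfolding mdist.simps Let_def th_def prod.case by (rule refl)
  also have "\<dots> \<le> th" by simp
  finally show ?thesis using th by linarith
qed

theorem mainTheorem8:
  fixes V :: "'a set" and E :: "'a \<Rightarrow> 'a \<Rightarrow> bool" and \<delta> lam :: real and u v :: 'a
  assumes "graph V E" and "connected_graph V E" and "thin_triangles V E \<delta>"
    and "u \<in> V" and "v \<in> V"
  shows "\<exists>c\<in>mpoints V E. \<forall>x\<in>V. \<forall>y\<in>V.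
           gdist V E x u < lam * gdist V E u v \<longrightarrow>
           gdist V E y v < (1 - lam) * gdist V E u v \<longrightarrow>
           (\<forall>p. shortest_path V E p x y \<longrightarrow>
                (\<exists>P\<in>path_points p. mdist V E c P \<le> 2 * \<delta>))"
proof -
  note G = assms(1) and C = assms(2) and T = assms(3)
  let ?D = "gdist V E"
  obtain pu where pu: "shortest_path V E pu u v" using sp_exists[OF C assms(4,5)] by blast
  define n where "n = length pu - 1"
  have Dn: "?D u v = real n" using sp_len(1)[OF pu] n_def by simp
  define k where "k = min (nat \<lfloor>lam * ?D u v\<rfloor>) n"
  have kn: "k < length pu" using k_def n_def sp_len(2)[OF pu] by (cases pu) auto
  define c where "c = pu ! k"
  have cV: "c \<in> V" using kn sp_len(3)[OF pu] c_def by auto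
  hence cm: "(c, c, 0) \<in> mpoints V E" unfolding mpoints_def by auto
  have "\<forall>x\<in>V. \<forall>y\<in>V.
           ?D x u < lam * ?D u v \<longrightarrow>
           ?D y v < (1 - lam) * ?D u v \<longrightarrow>
           (\<forall>p. shortest_path V E p x y \<longrightarrow>
                (\<exists>P\<in>path_points p. mdist V E (c, c, 0) P \<le> 2 * \<delta>))"
  proof (intro ballI impI allI)
    fix x y p assume xV: "x \<in> V" and yV: "y \<in> V" and hx: "?D x u < lam * ?D u v"
      and hy: "?D y v < (1 - lam) * ?D u v" and p: "shortest_path V E p x y"
    obtain m where m: "?D x u = real m" unfolding gdist_def by blast
    obtain m2 where m2: "?D y v = real m2" unfolding gdist_def by blast
    have key: "lam * real n + real m2 < real n" using hy Dn m2 by (simp add: algebra_simps)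
    have n1: "n \<ge> 1"
    proof (rule ccontr)
      assume "\<not> n \<ge> 1" hence "n = 0" by simp
      thus False using hx m Dn by simp
    qed
    have dpos: "\<delta> \<ge> 0"
    proof -
      have g: "gromov V E u v v = real n" unfolding gromov_def using Dn gdist_refl[OF assms(5)] by simp
      have "?D (pu ! 1) (pu ! 1) \<le> \<delta>"
        by (rule thinI[OF T assms(4,5,5) pu pu, of 1]) (use g n1 in auto)
      moreover have "1 < length pu" using n1 n_def by simp
      hence "pu ! 1 \<in> V" using sp_len(3)[OF pu] nth_mem by blast
      ultimately show ?thesis using gdist_refl[of "pu ! 1" V E] by simp
    qed
    have mk: "m \<le> k"
    proof -
      have "real m < lam * real n" using hx m Dn by simp
      hence "int m \<le> \<lfloor>lam * real n\<rfloor>" by linarith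
      moreover have "m \<le> n" using \<open>real m < lam * real n\<close> key by simp
      ultimately show ?thesis unfolding k_def Dn by auto
    qed
    have kl: "real k \<le> lam * real n"
    proof -
      have "real m \<le> lam * real n" using hx m Dn by simp
      hence "0 \<le> lam * real n" by simp
      hence "real (nat \<lfloor>lam * real n\<rfloor>) \<le> lam * real n" by linarith
      thus ?thesis unfolding k_def Dn by linarith
    qed
    obtain q where q: "shortest_path V E q u y" using sp_exists[OF C assms(4) yV] by blast
    have t1: "?D u v \<le> ?D u y + ?D y v" by (rule gdist_tri[OF C assms(4) yV assms(5)])
    have t2: "?D y u \<le> ?D y x + ?D x u" by (rule gdist_tri[OF C yV xV assms(4)])
    have s1: "?D v y = ?D y v" by (rule gdist_sym[OF G C assms(5) yV])
    have s2: "?D u y = ?D y u" by (rule gdist_sym[OF G C assms(4) yV])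
    have s3: "?D u x = ?D x u" by (rule gdist_sym[OF G C assms(4) xV])
    have s4: "?D x y = ?D y x" by (rule gdist_sym[OF G C xV yV])
    have lq: "real (length q - 1) = ?D u y" using sp_len(1)[OF q] .
    have lp: "real (length p - 1) = ?D x y" using sp_len(1)[OF p] .
    have kg: "real k \<le> gromov V E u v y" unfolding gromov_def using s1 t1 kl key Dn m2 by simp
    have kq: "k \<le> length q - 1" using kg lq t1 kl key Dn m2 by linarith
    have h1: "?D c (q ! k) \<le> \<delta>"
    proof (cases "k = 0")
      case True
      have "pu ! 0 = u" "q ! 0 = u" using sp_len(2,4)[OF pu] sp_len(2,4)[OF q] by (auto simp: hd_conv_nth)
      thus ?thesis using True c_def gdist_refl[OF assms(4)] dpos by simp
    next
      case False
      have "?D (pu ! k) (q ! k) \<le> \<delta>"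
        by (rule thinI[OF T assms(4,5) yV pu q]) (use False kg in auto)
      thus ?thesis unfolding c_def .
    qed
    define j where "j = (length q - 1) - k"
    have qne: "q \<noteq> []" using sp_len(2)[OF q] .
    have pne: "p \<noteq> []" using sp_len(2)[OF p] .
    have rj: "rev q ! j = q ! k"
    proof -
      have "j < length q" using qne unfolding j_def by (cases q) auto
      moreover have "length q - Suc j = k" using qne kq unfolding j_def by (cases q) auto
      ultimately show ?thesis by (simp add: rev_nth)
    qed
    have rq: "shortest_path V E (rev q) y u" by (rule sp_rev[OF G C q])
    have rp: "shortest_path V E (rev p) y x" by (rule sp_rev[OF G C p])
    have jr: "real j = ?D y u - real k" using j_def lq s2 kq by simp
    have jg: "real j \<le> gromov V E y u x" unfolding gromov_def using jr t2 s3 mk m by simp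
    have "real j \<le> real (length p - 1)" using jr t2 mk m lp s4 by simp
    hence jp: "j < length p" using pne by (cases p) auto
    have h2: "?D (q ! k) (rev p ! j) \<le> \<delta>"
    proof (cases "j = 0")
      case True
      have "rev q ! 0 = y" "rev p ! 0 = y" using sp_len(2,4)[OF rq] sp_len(2,4)[OF rp]
        by (auto simp: hd_conv_nth)
      thus ?thesis using True rj gdist_refl[OF yV] dpos by simp
    next
      case False
      have "?D (rev q ! j) (rev p ! j) \<le> \<delta>"
        by (rule thinI[OF T yV assms(4) xV rq rp]) (use False jg in auto)
      thus ?thesis using rj by simp
    qed
    define w where "w = rev p ! j"
    have wp: "w \<in> set p" using jp w_def nth_mem[of j "rev p"] by simp
    have wV: "w \<in> V" using wp sp_len(3)[OF p] by auto
    have qkV: "q ! k \<in> V" using kq qne sp_len(3)[OF q]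
      by (metis Suc_diff_1 le_imp_less_Suc length_greater_0_conv nth_mem subsetD)
    have "?D c w \<le> ?D c (q ! k) + ?D (q ! k) w" by (rule gdist_tri[OF C cV qkV wV])
    hence "?D w c \<le> 2 * \<delta>" using h1 h2 w_def gdist_sym[OF G C cV wV] by simp
    moreover have "(w, w, 0) \<in> path_points p" using wp unfolding path_points_def by auto
    ultimately show "\<exists>P\<in>path_points p. mdist V E (c, c, 0) P \<le> 2 * \<delta>"
      using mdist_vert[of V E c w] by (intro bexI[of _ "(w, w, 0)"]) auto
  qed
  thus ?thesis using cm by blast
qed

end
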